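(* We have $\mathcal{B}(\mathbb{C}_+)\subset\mathcal{A}(\mathbb{C}_+)$ and $\mathcal{B}_0(\mathbb{C}_+)\subset\mathcal{A}_0(\mathbb{C}_+)$. Moreover there exists a constant $K>0$ such that $\|\varphi\|_{\mathcal{A}}\le K\|\varphi\|_{\mathcal{B}}$ for all $\varphi\in\mathcal{B}(\mathbb{C}_+)$.
   Context: Fourier transform $\widehat f(u)=\int f(t)e^{-itu}dt$; $H^1(\mathbb{R})=\{h\in L^1:\widehat h(u)=0\ \forall u\le0\}$. $\mathcal{A}_0(\mathbb{R})$ (resp. $\mathcal{A}(\mathbb{R})$): functions $F=\sum_kf_k\star h_k$ (pointwise) with $(f_k)$ in $C_0(\mathbb{R})$ (resp. $BUC(\mathbb{R})$), $(h_k)\subset H^1(\mathbb{R})$, $\sum\|f_k\|_\infty\|h_k\|_1<\infty$, normed by the infimum of these sums. Besov spaces: fix $\psi$ in the Schwartz class with $\mathrm{supp}\,\psi\subset[\frac12,2]$, $\psi\ge0$, $\psi(t)+\psi(t/2)=1$ for $t\in[1,2]$; let $\psi_k(t)=\psi(2^{-k}t)$ and $\phi_k=\mathcal{F}^{-1}(\psi_k)$, $k\in\mathbb{Z}$. $\mathcal{B}(\mathbb{R})$ is the set of $F\in BUC(\mathbb{R})$ with $\sum_{k\in\mathbb{Z}}\|F\star\phi_k\|_\infty<\infty$ and $F=\sum_{k\in\mathbb{Z}}F\star\phi_k$, normed by $\|F\|_{\mathcal{B}}=\sum_k\|F\star\phi_k\|_\infty$; $\mathcal{B}_0(\mathbb{R})=\mathcal{B}(\mathbb{R})\cap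 C_0(\mathbb{R})$. All these functions lie in $H^\infty(\mathbb{R})$ (bounded functions with analytic Poisson extension $\mathcal{P}[F]$ to the upper half-plane); for such $F$ set $\widetilde F(z)=\mathcal{P}[F](iz)$ on $\mathbb{C}_+=\{\mathrm{Re}\,z>0\}$. $\mathcal{X}(\mathbb{C}_+)=\{\widetilde F:F\in\mathcal{X}(\mathbb{R})\}$ for $\mathcal{X}\in\{\mathcal{A},\mathcal{A}_0,\mathcal{B},\mathcal{B}_0\}$, with norms transferred from the line. *)

theory Defs
  imports "HOL-Analysis.Analysis"
begin

definition sup_norm :: "(real \<Rightarrow> complex) \<Rightarrow> real" where
  "sup_norm f = Sup (range (\<lambda>x. norm (f x)))"

definition L1_norm :: "(real \<Rightarrow> complex) \<Rightarrow> real" where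
  "L1_norm h = (LINT t|lborel. norm (h t))"

definition fourier :: "(real \<Rightarrow> complex) \<Rightarrow> real \<Rightarrow> complex" where
  "fourier f u = (LINT t|lborel. f t * cis (- (t * u)))"

definition inv_fourier :: "(real \<Rightarrow> complex) \<Rightarrow> real \<Rightarrow> complex" where
  "inv_fourier g t = complex_of_real (1 / (2 * pi)) * (LINT u|lborel. g u * cis (t * u))"

definition conv :: "(real \<Rightarrow> complex) \<Rightarrow> (real \<Rightarrow> complex) \<Rightarrow> real \<Rightarrow> complex" where
  "conv f h x = (LINT t|lborel. f (x - t) * h t)"

definition H1 :: "(real \<Rightarrow> complex) set" where
  "H1 = {h. integrable lborel h \<and> (\<forall>u\<le>0. fourier h u = 0)}"

definition BUC :: "(real \<Rightarrow> complex) set" where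
  "BUC = {f. bounded (range f) \<and> uniformly_continuous_on UNIV f}"

definition C0 :: "(real \<Rightarrow> complex) set" where
  "C0 = {f. continuous_on UNIV f \<and> (f \<longlongrightarrow> 0) at_top \<and> (f \<longlongrightarrow> 0) at_bot}"

definition A_rep :: "(real \<Rightarrow> complex) set \<Rightarrow> (real \<Rightarrow> complex)
    \<Rightarrow> (nat \<Rightarrow> real \<Rightarrow> complex) \<Rightarrow> (nat \<Rightarrow> real \<Rightarrow> complex) \<Rightarrow> bool" where
  "A_rep S F f h \<longleftrightarrow> (\<forall>k. f k \<in> S) \<and> (\<forall>k. h k \<in> H1)
     \<and> summable (\<lambda>k. sup_norm (f k) * L1_norm (h k))
     \<and> (\<forall>x. (\<lambda>k. conv (f k) (h k) x) sums F x)"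

definition A_space :: "(real \<Rightarrow> complex) set \<Rightarrow> (real \<Rightarrow> complex) set" where
  "A_space S = {F. \<exists>f h. A_rep S F f h}"

definition A_norm :: "(real \<Rightarrow> complex) set \<Rightarrow> (real \<Rightarrow> complex) \<Rightarrow> real" where
  "A_norm S F = Inf {(\<Sum>k. sup_norm (f k) * L1_norm (h k)) | f h. A_rep S F f h}"

abbreviation A_R :: "(real \<Rightarrow> complex) set" where "A_R \<equiv> A_space BUC"
abbreviation A0_R :: "(real \<Rightarrow> complex) set" where "A0_R \<equiv> A_space C0"

text \<open>The norm of A_0(R) and A(R) are both given by the infimum over the respective
  representations; only the A-norm is needed below.\<close>
abbreviation normA_R :: "(real \<Rightarrow> complex) \<Rightarrow> real" where "normA_R \<equiv> A_norm BUC"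

definition schwartz :: "(real \<Rightarrow> real) \<Rightarrow> bool" where
  "schwartz \<psi> \<longleftrightarrow> (\<forall>n x. (deriv ^^ n) \<psi> differentiable (at x))
     \<and> (\<forall>n m. \<exists>C. \<forall>t. \<bar>t ^ m * (deriv ^^ n) \<psi> t\<bar> \<le> C)"

definition admissible :: "(real \<Rightarrow> real) \<Rightarrow> bool" where
  "admissible \<psi> \<longleftrightarrow> schwartz \<psi> \<and> (\<forall>t. t \<notin> {1/2..2} \<longrightarrow> \<psi> t = 0)
     \<and> (\<forall>t. \<psi> t \<ge> 0) \<and> (\<forall>t\<in>{1..2}. \<psi> t + \<psi> (t / 2) = 1)"

definition psi_k :: "(real \<Rightarrow> real) \<Rightarrow> int \<Rightarrow> real \<Rightarrow> real" where
  "psi_k \<psi> k t = \<psi> (2 powr (- real_of_int k) * t)"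

definition phi_k :: "(real \<Rightarrow> real) \<Rightarrow> int \<Rightarrow> real \<Rightarrow> complex" where
  "phi_k \<psi> k = inv_fourier (\<lambda>u. complex_of_real (psi_k \<psi> k u))"

definition B_R :: "(real \<Rightarrow> real) \<Rightarrow> (real \<Rightarrow> complex) set" where
  "B_R \<psi> = {F. F \<in> BUC
     \<and> (\<lambda>k. sup_norm (conv F (phi_k \<psi> k))) summable_on (UNIV :: int set)
     \<and> (\<forall>x. ((\<lambda>k. conv F (phi_k \<psi> k) x) has_sum F x) (UNIV :: int set))}"

definition normB_R :: "(real \<Rightarrow> real) \<Rightarrow> (real \<Rightarrow> complex) \<Rightarrow> real" where
  "normB_R \<psi> F = (\<Sum>\<^sub>\<infinity>k\<in>(UNIV :: int set). sup_norm (conv F (phi_k \<psi> k)))"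

definition B0_R :: "(real \<Rightarrow> real) \<Rightarrow> (real \<Rightarrow> complex) set" where
  "B0_R \<psi> = B_R \<psi> \<inter> C0"

definition poisson :: "(real \<Rightarrow> complex) \<Rightarrow> complex \<Rightarrow> complex" where
  "poisson F w = (LINT t|lborel. (Im w / (pi * ((Re w - t)\<^sup>2 + (Im w)\<^sup>2))) *\<^sub>R F t)"

definition tildeF :: "(real \<Rightarrow> complex) \<Rightarrow> complex \<Rightarrow> complex" where
  "tildeF F z = (if Re z > 0 then poisson F (\<i> * z) else 0)"

definition half_space :: "(real \<Rightarrow> complex) set \<Rightarrow> (complex \<Rightarrow> complex) set" where
  "half_space X = tildeF ` X"

definition transfer_norm :: "(real \<Rightarrow> complex) set \<Rightarrow> ((real \<Rightarrow> complex) \<Rightarrow> real)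
    \<Rightarrow> (complex \<Rightarrow> complex) \<Rightarrow> real" where
  "transfer_norm X N \<phi> = Inf {N F | F. F \<in> X \<and> tildeF F = \<phi>}"

abbreviation A_C :: "(complex \<Rightarrow> complex) set" where "A_C \<equiv> half_space A_R"
abbreviation A0_C :: "(complex \<Rightarrow> complex) set" where "A0_C \<equiv> half_space A0_R"
abbreviation B_C :: "(real \<Rightarrow> real) \<Rightarrow> (complex \<Rightarrow> complex) set" where
  "B_C \<psi> \<equiv> half_space (B_R \<psi>)"
abbreviation B0_C :: "(real \<Rightarrow> real) \<Rightarrow> (complex \<Rightarrow> complex) set" where
  "B0_C \<psi> \<equiv> half_space (B0_R \<psi>)"
abbreviation normA_C :: "(complex \<Rightarrow> complex) \<Rightarrow> real" where
  "normA_C \<equiv> transfer_norm A_R normA_R"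
abbreviation normB_C :: "(real \<Rightarrow> real) \<Rightarrow> (complex \<Rightarrow> complex) \<Rightarrow> real" where
  "normB_C \<psi> \<equiv> transfer_norm (B_R \<psi>) (normB_R \<psi>)"

end

theory Submission
  imports Defs "HOL-Probability.Probability" "HOL-Library.Nat_Bijection"
begin

lemma ftc_cis:
  fixes f f' :: "real \<Rightarrow> real" and a b t :: real
  assumes ab: "a \<le> b" and d: "\<And>x. (f has_real_derivative f' x) (at x)"
    and c: "continuous_on {a..b} f'" and fa: "f a = 0" and fb: "f b = 0"
  shows "integral {a..b} (\<lambda>u. of_real (f' u) * cis (t*u))
       = - (\<i> * of_real t) * integral {a..b} (\<lambda>u. of_real (f u) * cis (t*u))"
proof -
  let ?h = "\<lambda>u. complex_of_real (f u) * cis (t*u)"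
  let ?A = "\<lambda>u. complex_of_real (f' u) * cis (t*u)"
  let ?B = "\<lambda>u. (\<i> * of_real t) * (complex_of_real (f u) * cis (t*u))"
  have cf: "continuous_on {a..b} f"
    using d by (meson DERIV_isCont continuous_at_imp_continuous_on)
  have der: "(?h has_vector_derivative (?A x + ?B x)) (at x within {a..b})" for x
  proof -
    have "((\<lambda>u. cis (t*u)) has_derivative (\<lambda>h. (t*h) *\<^sub>R (\<i> * cis (t*x)))) (at x within {a..b})"
      by (intro has_derivative_cis derivative_intros)
    hence c: "((\<lambda>u. cis (t*u)) has_vector_derivative (of_real t * (\<i> * cis (t*x)))) (at x within {a..b})"
      unfolding has_vector_derivative_def
      by (rule has_derivative_eq_rhs) (auto simp: fun_eq_iff scaleR_conv_of_real)
    have f1: "((\<lambda>u. complex_of_real (f u)) has_vector_derivative of_real (f' x)) (at x within {a..b})"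
      by (rule has_vector_derivative_of_real) (use d[of x] has_field_derivative_at_within in blast)
    from has_vector_derivative_mult[OF f1 c] show ?thesis by (simp add: algebra_simps)
  qed
  have "((\<lambda>x. ?A x + ?B x) has_integral (?h b - ?h a)) {a..b}"
    by (rule fundamental_theorem_of_calculus[OF ab]) (use der in auto)
  hence I: "((\<lambda>x. ?A x + ?B x) has_integral 0) {a..b}" using fa fb by simp
  have iA: "?A integrable_on {a..b}"
    by (intro integrable_continuous_interval continuous_intros c)
  have iB0: "(\<lambda>u. complex_of_real (f u) * cis (t*u)) integrable_on {a..b}"
    by (intro integrable_continuous_interval continuous_intros cf)
  have "integral {a..b} (\<lambda>x. ?A x + ?B x) = 0" using I by (rule integral_unique)
  moreover have "integral {a..b} (\<lambda>x. ?A x + ?B x) = integral {a..b} ?A + integral {a..b} ?B"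
    by (intro integral_add iA integrable_continuous_interval continuous_intros cf)
  moreover have "integral {a..b} ?B = (\<i> * of_real t) * integral {a..b} (\<lambda>u. of_real (f u) * cis (t*u))"
    by (simp add: integral_mult_right)
  ultimately show ?thesis by (simp add: eq_neg_iff_add_eq_0)
qed

context
  fixes \<psi> :: "real \<Rightarrow> real"
  assumes adm: "admissible \<psi>"
begin

lemma psi_zero: "t < 1/2 \<or> t > 2 \<Longrightarrow> \<psi> t = 0"
  using adm unfolding admissible_def by auto

lemma psi_nonneg: "\<psi> t \<ge> 0"
  using adm unfolding admissible_def by auto

lemma psi_part: "t \<in> {1..2} \<Longrightarrow> \<psi> t + \<psi> (t/2) = 1"
  using adm unfolding admissible_def by auto

lemma D_diff: "(deriv ^^ n) \<psi> differentiable (at x)"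
  using adm unfolding admissible_def schwartz_def by auto

lemma D_deriv: "((deriv ^^ n) \<psi> has_real_derivative (deriv ^^ Suc n) \<psi> x) (at x)"
  using D_diff[of n x] by (simp add: DERIV_deriv_iff_real_differentiable)

lemma D_cont: "continuous_on S ((deriv ^^ n) \<psi>)"
  by (meson D_deriv DERIV_isCont continuous_at_imp_continuous_on)

lemma psi_cont: "continuous_on S \<psi>" using D_cont[of _ 0] by simp

lemma psi_isCont: "isCont \<psi> x"
  using psi_cont[of UNIV] by (simp add: continuous_on_eq_continuous_at)

lemma psi_half: "\<psi> (1/2) = 0"
proof -
  have "(\<psi> \<longlongrightarrow> \<psi> (1/2)) (at_left (1/2))"
    using psi_isCont[of "1/2"] filterlim_at_split unfolding isCont_def by blast
  moreover have "(\<psi> \<longlongrightarrow> 0) (at_left (1/2))"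
  proof (rule tendsto_eventually)
    show "\<forall>\<^sub>F x in at_left (1/2). \<psi> x = 0"
      by (rule eventually_mono[OF eventually_at_left_real[of 0 "1/2"]]) (auto intro: psi_zero)
  qed
  ultimately show ?thesis using tendsto_unique trivial_limit_at_left_real by blast
qed

lemma psi_two: "\<psi> 2 = 0"
proof -
  have "(\<psi> \<longlongrightarrow> \<psi> 2) (at_right 2)"
    using psi_isCont[of "2"] filterlim_at_split unfolding isCont_def by blast
  moreover have "(\<psi> \<longlongrightarrow> 0) (at_right 2)"
  proof (rule tendsto_eventually)
    show "\<forall>\<^sub>F x in at_right 2. \<psi> x = 0"
      by (rule eventually_mono[OF eventually_at_right_real[of 2 3]]) (auto intro: psi_zero)
  qed
  ultimately show ?thesis using tendsto_unique trivial_limit_at_right_real by blast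
qed

lemma psi_zero': "t \<le> 1/2 \<or> t \<ge> 2 \<Longrightarrow> \<psi> t = 0"
proof -
  assume "t \<le> 1/2 \<or> t \<ge> 2"
  then consider "t < 1/2 \<or> t > 2" | "t = 1/2" | "t = 2" by linarith
  then show ?thesis
  proof cases
    case 1 then show ?thesis using psi_zero by auto
  next
    case 2 then show ?thesis using psi_half by (simp only:)
  next
    case 3 then show ?thesis using psi_two by (simp only:)
  qed
qed

lemma D1_zero: "x < 1/2 \<or> x > 2 \<Longrightarrow> (deriv ^^ 1) \<psi> x = 0"
proof -
  assume x: "x < 1/2 \<or> x > 2"
  obtain d where d: "d > 0" "\<forall>y. \<bar>x - y\<bar> < d \<longrightarrow> \<psi> x = \<psi> y"
  proof (cases "x < 1/2")
    case True
    show ?thesis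
    proof (rule that[of "1/2 - x"])
      show "\<forall>y. \<bar>x - y\<bar> < 1/2 - x \<longrightarrow> \<psi> x = \<psi> y"
      proof (intro allI impI)
        fix y assume "\<bar>x - y\<bar> < 1/2 - x"
        hence "y < 1/2" by linarith
        thus "\<psi> x = \<psi> y" using True psi_zero by auto
      qed
    qed (use True in auto)
  next
    case False
    with x have "x > 2" by auto
    show ?thesis
    proof (rule that[of "x - 2"])
      show "\<forall>y. \<bar>x - y\<bar> < x - 2 \<longrightarrow> \<psi> x = \<psi> y"
      proof (intro allI impI)
        fix y assume "\<bar>x - y\<bar> < x - 2"
        hence "y > 2" by linarith
        thus "\<psi> x = \<psi> y" using \<open>x > 2\<close> psi_zero by auto
      qed
    qed (use \<open>x > 2\<close> in auto)
  qed
  have "(\<psi> has_real_derivative (deriv ^^ 1) \<psi> x) (at x)" using D_deriv[of 0 x] by simp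
  thus ?thesis using DERIV_local_const d by blast
qed

end

lemma lint_to_int:
  fixes g :: "real \<Rightarrow> complex" and a b :: real
  assumes c: "continuous_on {a..b} g" and z: "\<And>u. u \<notin> {a..b} \<Longrightarrow> g u = 0"
  shows "integrable lborel g" "(LINT u|lborel. g u) = integral {a..b} g"
proof -
  have e: "g = (\<lambda>x. indicator {a..b} x *\<^sub>R g x)"
    using z by (auto simp: fun_eq_iff indicator_def)
  have si: "set_integrable lborel {a..b} g"
    unfolding set_integrable_def by (rule borel_integrable_compact[OF compact_Icc c])
  then show "integrable lborel g" unfolding set_integrable_def by (subst e)
  have "(LINT u|lborel. g u) = set_lebesgue_integral lborel {a..b} g"
    unfolding set_lebesgue_integral_def by (subst e) simp
  also have "\<dots> = integral {a..b} g" by (rule set_borel_integral_eq_integral[OF si])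
  finally show "(LINT u|lborel. g u) = integral {a..b} g" .
qed

lemma integrable_inv_sq: "integrable lborel (\<lambda>x::real. inverse (1 + x^2))"
  using integrable_inverse_1_plus_square unfolding set_integrable_def
  by (simp add: einterval_def)

context
  fixes \<psi> :: "real \<Rightarrow> real"
  assumes adm: "admissible \<psi>"
begin

definition "J n t = integral {0..3} (\<lambda>u. complex_of_real ((deriv ^^ n) \<psi> u) * cis (t*u))"
definition "Bd n = integral {0..3::real} (\<lambda>u. \<bar>(deriv ^^ n) \<psi> u\<bar>)"

lemma Bd_nonneg: "Bd n \<ge> 0"
proof -
  have c: "continuous_on {0..3} ((deriv ^^ n) \<psi>)" by (rule D_cont[OF adm])
  show ?thesis unfolding Bd_def
    by (rule integral_nonneg) (auto intro!: integrable_continuous_interval continuous_intros c)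
qed

lemma J_rec:
  assumes "n \<le> 1"
  shows "J (Suc n) t = - (\<i> * of_real t) * J n t"
proof -
  have z: "(deriv ^^ n) \<psi> 0 = 0 \<and> (deriv ^^ n) \<psi> 3 = 0"
    using assms psi_zero[OF adm] D1_zero[OF adm] by (cases n) auto
  have cs: "continuous_on {0..3} ((deriv ^^ Suc n) \<psi>)" by (rule D_cont[OF adm])
  show ?thesis unfolding J_def
    by (rule ftc_cis[OF _ D_deriv[OF adm] cs]) (use z in auto)
qed

lemma J_bound: "norm (J n t) \<le> Bd n"
  unfolding J_def Bd_def
proof (rule integral_norm_bound_integral)
  have c: "continuous_on {0..3} ((deriv ^^ n) \<psi>)" by (rule D_cont[OF adm])
  show "(\<lambda>u. complex_of_real ((deriv ^^ n) \<psi> u) * cis (t * u)) integrable_on {0..3}"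
    by (intro integrable_continuous_interval continuous_intros c)
  show "(\<lambda>u. \<bar>(deriv ^^ n) \<psi> u\<bar>) integrable_on {0..3}"
    by (intro integrable_continuous_interval continuous_intros c)
  show "\<And>x. x \<in> {0..3} \<Longrightarrow> norm (complex_of_real ((deriv ^^ n) \<psi> x) * cis (t * x)) \<le> \<bar>(deriv ^^ n) \<psi> x\<bar>"
    by (simp add: norm_mult)
qed

lemma J2: "J 2 t = - (of_real (t^2)) * J 0 t"
  using J_rec[of 1 t] J_rec[of 0 t] by (simp add: numeral_2_eq_2 power2_eq_square algebra_simps)

lemma I_eq_J: "(LINT u|lborel. complex_of_real (\<psi> u) * cis (t*u)) = J 0 t"
  and I_integrable: "integrable lborel (\<lambda>u. complex_of_real (\<psi> u) * cis (t*u))"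
proof -
  have c: "continuous_on {0..3} (\<lambda>u. complex_of_real (\<psi> u) * cis (t*u))"
    by (intro continuous_intros psi_cont[OF adm])
  have z: "u \<notin> {0..3} \<Longrightarrow> complex_of_real (\<psi> u) * cis (t*u) = 0" for u
    using psi_zero[OF adm, of u] by auto
  show "(LINT u|lborel. complex_of_real (\<psi> u) * cis (t*u)) = J 0 t"
    using lint_to_int(2)[OF c z] by (simp add: J_def)
  show "integrable lborel (\<lambda>u. complex_of_real (\<psi> u) * cis (t*u))"
    using lint_to_int(1)[OF c z] .
qed

lemma I_decay: "norm (J 0 t) * (1 + t^2) \<le> Bd 0 + Bd 2"
proof -
  have "norm (J 0 t) * t^2 = norm (J 2 t)" by (simp add: J2 norm_mult norm_power)
  also have "\<dots> \<le> Bd 2" by (rule J_bound)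
  finally show ?thesis using J_bound[of 0 t] by (simp add: algebra_simps)
qed

lemma psi_meas[measurable]: "\<psi> \<in> borel_measurable borel"
  using psi_cont[OF adm, of UNIV] by (simp add: borel_measurable_continuous_onI)

lemma phi0_eq: "phi_k \<psi> 0 t = complex_of_real (1/(2*pi)) * J 0 t"
  unfolding phi_k_def inv_fourier_def psi_k_def using I_eq_J[of t] by (simp add: mult.commute)

lemma cis_meas[measurable]: "cis \<in> borel_measurable borel"
  by (intro borel_measurable_continuous_onI continuous_intros)

lemma phi0_meas[measurable]: "phi_k \<psi> 0 \<in> borel_measurable borel"
proof -
  have "(\<lambda>(t,u). complex_of_real (\<psi> (2 powr (- real_of_int 0) * u)) * cis (t * u)) \<in> borel_measurable (borel \<Otimes>\<^sub>M lborel)"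
    by measurable
  hence "(\<lambda>t. LINT u|lborel. complex_of_real (\<psi> (2 powr (- real_of_int 0) * u)) * cis (t * u)) \<in> borel_measurable borel"
    using lborel.borel_measurable_lebesgue_integral[of "\<lambda>t u. complex_of_real (\<psi> (2 powr (- real_of_int 0) * u)) * cis (t * u)" borel] by simp
  thus ?thesis unfolding phi_k_def inv_fourier_def psi_k_def by measurable
qed

lemma phi0_integrable: "integrable lborel (phi_k \<psi> 0)"
proof (rule Bochner_Integration.integrable_bound)
  show "integrable lborel (\<lambda>t. ((Bd 0 + Bd 2) / (2*pi)) * inverse (1 + t^2))"
    using integrable_inv_sq by simp
  show "phi_k \<psi> 0 \<in> borel_measurable lborel" by simp
  show "AE t in lborel. norm (phi_k \<psi> 0 t) \<le> norm ((Bd 0 + Bd 2) / (2*pi) * inverse (1 + t^2))"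
  proof (rule AE_I2)
    fix t :: real
    have p: "1 + t^2 > 0" by (simp add: add_pos_nonneg)
    have "norm (phi_k \<psi> 0 t) = norm (J 0 t) / (2*pi)" by (simp add: phi0_eq norm_mult norm_divide)
    also have "\<dots> \<le> ((Bd 0 + Bd 2) / (1 + t^2)) / (2*pi)"
      using I_decay[of t] p by (intro divide_right_mono) (auto simp: field_simps)
    also have "\<dots> \<le> norm ((Bd 0 + Bd 2) / (2*pi) * inverse (1 + t^2))"
      using Bd_nonneg[of 0] Bd_nonneg[of 2] p by (simp add: field_simps)
    finally show "norm (phi_k \<psi> 0 t) \<le> norm ((Bd 0 + Bd 2) / (2*pi) * inverse (1 + t^2))" .
  qed
qed

end

declare psi_meas[measurable del] phi0_meas[measurable del] cis_meas[measurable del]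

lemma cis_measurable[measurable]: "cis \<in> borel_measurable borel"
  by (intro borel_measurable_continuous_onI continuous_intros)

lemma fubini_lborel:
  fixes f :: "real \<Rightarrow> real \<Rightarrow> complex" and a b :: "real \<Rightarrow> real"
  assumes m[measurable]: "(\<lambda>(x,y). f x y) \<in> borel_measurable (lborel \<Otimes>\<^sub>M lborel)"
    and ai: "integrable lborel a" and bi: "integrable lborel b"
    and bd: "\<And>x y. norm (f x y) \<le> a x * b y"
    and a0: "\<And>x. a x \<ge> 0" and b0: "\<And>y. b y \<ge> 0"
  shows "integrable (lborel \<Otimes>\<^sub>M lborel) (\<lambda>(x,y). f x y)"
    and "(LINT x|lborel. LINT y|lborel. f x y) = (LINT y|lborel. LINT x|lborel. f x y)"
proof -
  have am[measurable]: "a \<in> borel_measurable lborel" using ai by auto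
  have bm[measurable]: "b \<in> borel_measurable lborel" using bi by auto
  have ab: "integrable (lborel \<Otimes>\<^sub>M lborel) (\<lambda>(x,y). a x * b y)"
  proof (rule lborel_pair.Fubini_integrable)
    show "(\<lambda>(x,y). a x * b y) \<in> borel_measurable (lborel \<Otimes>\<^sub>M lborel)" by measurable
    have "integrable lborel (\<lambda>x. a x * (LINT y|lborel. b y))"
      using ai by simp
    then show "integrable lborel (\<lambda>x. LINT y|lborel. norm ((\<lambda>(x,y). a x * b y) (x, y)))"
      by (simp add: a0 b0 abs_mult)
    show "AE x in lborel. integrable lborel (\<lambda>y. (\<lambda>(x,y). a x * b y) (x, y))"
      using bi by simp
  qed
  show fi: "integrable (lborel \<Otimes>\<^sub>M lborel) (\<lambda>(x,y). f x y)"
  proof (rule Bochner_Integration.integrable_bound[OF ab m])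
    show "AE p in lborel \<Otimes>\<^sub>M lborel. norm ((\<lambda>(x,y). f x y) p) \<le> norm ((\<lambda>(x,y). a x * b y) p)"
      by (rule AE_I2) (auto simp: split_beta abs_mult a0 b0 bd)
  qed
  show "(LINT x|lborel. LINT y|lborel. f x y) = (LINT y|lborel. LINT x|lborel. f x y)"
    using lborel_pair.Fubini_integral[OF fi] by simp
qed

lemma cis_iexp: "iexp x = cis x"
  by (simp add: cis_conv_exp)

lemma gauss_std: "(LINT x|lborel. cis (s * x) * complex_of_real (exp (- (x^2) / 2)))
     = complex_of_real (sqrt (2*pi) * exp (- (s^2)/2))"
proof -
  have "char std_normal_distribution s = complex_of_real (exp (- (s^2)/2))"
    using char_std_normal_distribution by simp
  hence "(LINT x|lborel. std_normal_density x *\<^sub>R cis (s * x)) = complex_of_real (exp (- (s^2)/2))"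
    unfolding char_def cis_iexp
    by (subst (asm) integral_density) (auto simp: normal_density_nonneg)
  hence "(LINT x|lborel. complex_of_real (1 / sqrt (2 * pi)) * (cis (s * x) * complex_of_real (exp (- (x^2) / 2))))
      = complex_of_real (exp (- (s^2)/2))"
    by (simp add: std_normal_density_def scaleR_conv_of_real mult_ac)
  hence "complex_of_real (1 / sqrt (2 * pi)) * (LINT x|lborel. cis (s * x) * complex_of_real (exp (- (x^2) / 2)))
      = complex_of_real (exp (- (s^2)/2))"
    by simp
  thus ?thesis by (simp add: field_simps)
qed

lemma gauss_ft:
  fixes a e :: real assumes e: "e > 0"
  shows "(LINT t|lborel. cis (t*a) * complex_of_real (exp (- ((e*t)^2)/2)))
     = complex_of_real (sqrt (2*pi) / e * exp (- ((a/e)^2)/2))"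
proof -
  have "(LINT x|lborel. cis ((a/e) * x) * complex_of_real (exp (- (x^2) / 2)))
      = e *\<^sub>R (LINT t|lborel. cis ((a/e) * (0 + e*t)) * complex_of_real (exp (- ((0 + e*t)^2) / 2)))"
    using lborel_integral_real_affine[of e "\<lambda>x. cis ((a/e) * x) * complex_of_real (exp (- (x^2) / 2))" 0] e
    by simp
  also have "(\<lambda>t. cis ((a/e) * (0 + e*t)) * complex_of_real (exp (- ((0 + e*t)^2) / 2)))
      = (\<lambda>t. cis (t*a) * complex_of_real (exp (- ((e*t)^2)/2)))"
    using e by (auto simp: fun_eq_iff field_simps)
  finally have "e *\<^sub>R (LINT t|lborel. cis (t*a) * complex_of_real (exp (- ((e*t)^2)/2)))
      = complex_of_real (sqrt (2*pi) * exp (- ((a/e)^2)/2))"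
    using gauss_std[of "a/e"] by simp
  thus ?thesis using e by (simp add: scaleR_conv_of_real field_simps)
qed

lemma gauss_integrable:
  fixes e :: real assumes e: "e > 0"
  shows "integrable lborel (\<lambda>t. exp (- ((e*t)^2)/2))"
proof -
  have "integrable lborel (\<lambda>x. sqrt (2*pi) * std_normal_density x)"
    using integrable_normal_density[of 0 1] by simp
  hence "integrable lborel (\<lambda>t. sqrt (2*pi) * std_normal_density (0 + e*t))"
    using lborel_integrable_real_affine[of "\<lambda>x. sqrt (2*pi) * std_normal_density x" e 0] e by simp
  thus ?thesis by (simp add: std_normal_density_def)
qed

lemma inv_fourier_meas[measurable]:
  assumes [measurable]: "g \<in> borel_measurable borel"
  shows "inv_fourier g \<in> borel_measurable borel"
proof -
  have "(\<lambda>(t,u). g u * cis (t * u)) \<in> borel_measurable (borel \<Otimes>\<^sub>M lborel)"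
    by measurable
  hence "(\<lambda>t. LINT u|lborel. g u * cis (t * u)) \<in> borel_measurable borel"
    using lborel.borel_measurable_lebesgue_integral[of "\<lambda>t u. g u * cis (t * u)" borel] by simp
  thus ?thesis unfolding inv_fourier_def by measurable
qed

lemma fourier_meas[measurable]:
  assumes [measurable]: "g \<in> borel_measurable borel"
  shows "fourier g \<in> borel_measurable borel"
proof -
  have "(\<lambda>(u,t). g t * cis (- (t * u))) \<in> borel_measurable (borel \<Otimes>\<^sub>M lborel)"
    by measurable
  hence "(\<lambda>u. LINT t|lborel. g t * cis (- (t * u))) \<in> borel_measurable borel"
    using lborel.borel_measurable_lebesgue_integral[of "\<lambda>u t. g t * cis (- (t * u))" borel] by simp
  thus ?thesis unfolding fourier_def by measurable
qed

lemma inv_gauss_step: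
  fixes g :: "real \<Rightarrow> complex" and e v :: real
  assumes gm[measurable]: "g \<in> borel_measurable borel" and gi: "integrable lborel g"
    and e: "e > 0"
  shows "(LINT t|lborel. inv_fourier g t * cis (- (t * v)) * complex_of_real (exp (- ((e*t)^2)/2)))
     = (LINT w|lborel. g (v + e * w) * complex_of_real (std_normal_density w))"
proof -
  let ?E = "\<lambda>t. exp (- ((e*t)^2)/2)"
  let ?H = "\<lambda>t u. g u * cis (t*(u-v)) * complex_of_real (?E t)"
  have 1: "inv_fourier g t * cis (- (t * v)) * complex_of_real (?E t)
        = complex_of_real (1/(2*pi)) * (LINT u|lborel. ?H t u)" for t
  proof -
    have "inv_fourier g t * cis (- (t * v)) * complex_of_real (?E t)
        = complex_of_real (1/(2*pi)) * ((LINT u|lborel. g u * cis (t*u)) * (cis (- (t * v)) * complex_of_real (?E t)))"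
      unfolding inv_fourier_def by (simp add: mult_ac)
    also have "(LINT u|lborel. g u * cis (t*u)) * (cis (- (t * v)) * complex_of_real (?E t))
        = (LINT u|lborel. g u * cis (t*u) * (cis (- (t * v)) * complex_of_real (?E t)))"
      by simp
    also have "\<dots> = (LINT u|lborel. ?H t u)"
      by (rule Bochner_Integration.integral_cong) (auto simp: cis_mult mult_ac right_diff_distrib)
    finally show ?thesis .
  qed
  have fub: "(LINT t|lborel. LINT u|lborel. ?H t u) = (LINT u|lborel. LINT t|lborel. ?H t u)"
  proof (rule fubini_lborel(2)[where a="?E" and b="\<lambda>u. norm (g u)"])
    show "(\<lambda>(t,u). ?H t u) \<in> borel_measurable (lborel \<Otimes>\<^sub>M lborel)" by measurable
    show "integrable lborel ?E" using gauss_integrable[OF e] .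
    show "integrable lborel (\<lambda>u. norm (g u))" using gi by simp
    show "norm (?H t u) \<le> ?E t * norm (g u)" for t u by (simp add: norm_mult)
  qed auto
  have 2: "(LINT t|lborel. ?H t u) = g u * complex_of_real (sqrt (2*pi) / e * exp (- (((u-v)/e)^2)/2))" for u
  proof -
    have "(LINT t|lborel. ?H t u) = g u * (LINT t|lborel. cis (t*(u-v)) * complex_of_real (?E t))"
      by (simp add: mult_ac)
    also have "\<dots> = g u * complex_of_real (sqrt (2*pi) / e * exp (- (((u-v)/e)^2)/2))"
      using gauss_ft[OF e, of "u-v"] by simp
    finally show ?thesis .
  qed
  have sq: "sqrt (2*pi) * sqrt (2*pi) = 2*pi" by simp
  have 3: "complex_of_real (1/(2*pi)) * (g u * complex_of_real (sqrt (2*pi) / e * exp (- (((u-v)/e)^2)/2)))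
       = g u * complex_of_real (1/e * std_normal_density ((u-v)/e))" for u
  proof -
    have "1/(2*pi) * (sqrt (2*pi) / e * exp (- (((u-v)/e)^2)/2)) = 1/e * std_normal_density ((u-v)/e)"
    proof -
      have k: "sqrt (2*pi) / (2*pi) = 1 / sqrt (2*pi)"
      proof -
        have "sqrt (2*pi) / (2*pi) = sqrt (2*pi) / (sqrt (2*pi) * sqrt (2*pi))" by (subst sq) (rule refl)
        also have "\<dots> = 1 / sqrt (2*pi)"
        proof -
          have g: "\<And>a::real. a \<noteq> 0 \<Longrightarrow> a / (a*a) = 1/a" by (simp add: field_simps)
          show ?thesis by (rule g) simp
        qed
        finally show ?thesis .
      qed
      have "1/(2*pi) * (sqrt (2*pi) / e * exp (- (((u-v)/e)^2)/2))
          = (sqrt (2*pi) / (2*pi)) * (1/e) * exp (- (((u-v)/e)^2)/2)" by simp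
      also have "\<dots> = 1/e * std_normal_density ((u-v)/e)"
        unfolding k std_normal_density_def by simp
      finally show ?thesis .
    qed
    hence "complex_of_real (1/(2*pi)) * complex_of_real (sqrt (2*pi) / e * exp (- (((u-v)/e)^2)/2))
        = complex_of_real (1/e * std_normal_density ((u-v)/e))"
      by (simp only: of_real_mult[symmetric])
    thus ?thesis by (metis mult.left_commute)
  qed
  have "(LINT t|lborel. inv_fourier g t * cis (- (t * v)) * complex_of_real (?E t))
      = (LINT t|lborel. complex_of_real (1/(2*pi)) * (LINT u|lborel. ?H t u))"
    by (simp only: 1)
  also have "\<dots> = complex_of_real (1/(2*pi)) * (LINT t|lborel. LINT u|lborel. ?H t u)"
    by simp
  also have "\<dots> = complex_of_real (1/(2*pi)) * (LINT u|lborel. LINT t|lborel. ?H t u)"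
    by (simp only: fub)
  also have "\<dots> = (LINT u|lborel. complex_of_real (1/(2*pi)) * (LINT t|lborel. ?H t u))"
    by simp
  also have "\<dots> = (LINT u|lborel. g u * complex_of_real (1/e * std_normal_density ((u-v)/e)))"
    by (simp only: 2 3)
  also have "\<dots> = e *\<^sub>R (LINT w|lborel. g (v + e*w) * complex_of_real (1/e * std_normal_density ((v + e*w - v)/e)))"
    using lborel_integral_real_affine[of e "\<lambda>u. g u * complex_of_real (1/e * std_normal_density ((u-v)/e))" v] e
    by simp
  also have "\<dots> = (LINT w|lborel. g (v + e * w) * complex_of_real (std_normal_density w))"
    using e by (simp add: scaleR_conv_of_real)
  finally show ?thesis .
qed

lemma inversion:
  fixes g :: "real \<Rightarrow> complex" and M v :: real
  assumes gm[measurable]: "g \<in> borel_measurable borel" and gi: "integrable lborel g"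
    and gc: "isCont g v" and gb: "\<And>u. norm (g u) \<le> M"
    and phi: "integrable lborel (inv_fourier g)"
  shows "fourier (inv_fourier g) v = g v"
proof -
  define e where "e n = inverse (real (Suc n))" for n
  have e0: "e n > 0" for n by (simp add: e_def)
  have elim: "e \<longlonglongrightarrow> 0" unfolding e_def by (rule LIMSEQ_inverse_real_of_nat)
  define S where "S n = (LINT t|lborel. inv_fourier g t * cis (- (t * v)) * complex_of_real (exp (- ((e n * t)^2)/2)))" for n
  have S1: "S \<longlonglongrightarrow> fourier (inv_fourier g) v"
  proof -
    have "(\<lambda>n. S n) \<longlonglongrightarrow> (LINT t|lborel. inv_fourier g t * cis (- (t * v)))"
      unfolding S_def
    proof (rule integral_dominated_convergence[where w="\<lambda>t. norm (inv_fourier g t)"])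
      show "(\<lambda>t. inv_fourier g t * cis (- (t * v))) \<in> borel_measurable lborel" by measurable
      show "\<And>n. (\<lambda>t. inv_fourier g t * cis (- (t * v)) * complex_of_real (exp (- ((e n * t)^2)/2))) \<in> borel_measurable lborel"
        by measurable
      show "integrable lborel (\<lambda>t. norm (inv_fourier g t))" using phi by simp
      show "AE t in lborel. (\<lambda>n. inv_fourier g t * cis (- (t * v)) * complex_of_real (exp (- ((e n * t)^2)/2)))
              \<longlonglongrightarrow> inv_fourier g t * cis (- (t * v))"
      proof (rule AE_I2)
        fix t
        have "(\<lambda>n. complex_of_real (exp (- ((e n * t)^2)/2))) \<longlonglongrightarrow> complex_of_real (exp (- ((0 * t)^2)/2))"
          by (intro tendsto_intros elim) auto
        hence "(\<lambda>n. inv_fourier g t * cis (- (t * v)) * complex_of_real (exp (- ((e n * t)^2)/2)))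
              \<longlonglongrightarrow> inv_fourier g t * cis (- (t * v)) * complex_of_real (exp (- ((0 * t)^2)/2))"
          by (rule tendsto_mult_left)
        thus "(\<lambda>n. inv_fourier g t * cis (- (t * v)) * complex_of_real (exp (- ((e n * t)^2)/2)))
              \<longlonglongrightarrow> inv_fourier g t * cis (- (t * v))" by simp
      qed
      show "\<And>n. AE t in lborel. norm (inv_fourier g t * cis (- (t * v)) * complex_of_real (exp (- ((e n * t)^2)/2)))
              \<le> norm (inv_fourier g t)"
        by (rule AE_I2) (auto simp: norm_mult intro!: mult_left_le)
    qed
    thus ?thesis by (simp add: fourier_def)
  qed
  have S2: "S n = (LINT w|lborel. g (v + e n * w) * complex_of_real (std_normal_density w))" for n
    unfolding S_def by (rule inv_gauss_step[OF gm gi e0])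
  have S3: "(\<lambda>n. LINT w|lborel. g (v + e n * w) * complex_of_real (std_normal_density w))
       \<longlonglongrightarrow> (LINT w|lborel. g v * complex_of_real (std_normal_density w))"
  proof (rule integral_dominated_convergence[where w="\<lambda>w. M * std_normal_density w"])
    show "(\<lambda>w. g v * complex_of_real (std_normal_density w)) \<in> borel_measurable lborel" by measurable
    show "\<And>n. (\<lambda>w. g (v + e n * w) * complex_of_real (std_normal_density w)) \<in> borel_measurable lborel"
      by measurable
    show "integrable lborel (\<lambda>w. M * std_normal_density w)"
      using integrable_normal_density[of 0 1] by simp
    show "AE w in lborel. (\<lambda>n. g (v + e n * w) * complex_of_real (std_normal_density w))
            \<longlonglongrightarrow> g v * complex_of_real (std_normal_density w)"
    proof (rule AE_I2)
      fix w
      have "(\<lambda>n. v + e n * w) \<longlonglongrightarrow> v + 0 * w" by (intro tendsto_intros elim)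
      hence "(\<lambda>n. g (v + e n * w)) \<longlonglongrightarrow> g v"
        using isCont_tendsto_compose[OF gc] by simp
      thus "(\<lambda>n. g (v + e n * w) * complex_of_real (std_normal_density w))
            \<longlonglongrightarrow> g v * complex_of_real (std_normal_density w)"
        by (intro tendsto_intros)
    qed
    show "\<And>n. AE w in lborel. norm (g (v + e n * w) * complex_of_real (std_normal_density w))
            \<le> M * std_normal_density w"
      by (rule AE_I2) (auto simp: norm_mult normal_density_nonneg intro!: mult_right_mono gb)
  qed
  have "(LINT w|lborel. g v * complex_of_real (std_normal_density w)) = g v"
    using integral_normal_density[of 1 0] by simp
  with S3 have "(\<lambda>n. S n) \<longlonglongrightarrow> g v" unfolding S2 by simp
  with S1 show ?thesis using LIMSEQ_unique by blast
qed


context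
  fixes \<psi> :: "real \<Rightarrow> real"
  assumes adm: "admissible \<psi>"
begin

lemma psi_meas'[measurable]: "\<psi> \<in> borel_measurable borel"
  by (rule psi_meas[OF adm])

lemma pow2_inv: "2 powr (- real_of_int k) * 2 powr (real_of_int k) = 1"
  by (simp add: powr_minus)

lemma phi_scale: "phi_k \<psi> k t = complex_of_real (2 powr real_of_int k) * phi_k \<psi> 0 (2 powr real_of_int k * t)"
proof -
  define c where "c = 2 powr real_of_int k"
  have c0: "c > 0" by (simp add: c_def)
  have "(LINT u|lborel. complex_of_real (\<psi> (2 powr (- real_of_int k) * u)) * cis (t * u))
      = \<bar>c\<bar> *\<^sub>R (LINT x|lborel. complex_of_real (\<psi> (2 powr (- real_of_int k) * (0 + c * x))) * cis (t * (0 + c * x)))"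
    using lborel_integral_real_affine[of c "\<lambda>u. complex_of_real (\<psi> (2 powr (- real_of_int k) * u)) * cis (t * u)" 0] c0
    by simp
  also have "(\<lambda>x. complex_of_real (\<psi> (2 powr (- real_of_int k) * (0 + c * x))) * cis (t * (0 + c * x)))
      = (\<lambda>x. complex_of_real (\<psi> x) * cis ((c * t) * x))"
  proof
    fix x
    have "2 powr (- real_of_int k) * (0 + c * x) = (2 powr (- real_of_int k) * c) * x"
      by (simp only: add_0_left mult.assoc)
    also have "\<dots> = x" using pow2_inv[of k] unfolding c_def by (simp only: mult_1_left)
    finally have A: "2 powr (- real_of_int k) * (0 + c * x) = x" .
    have B: "cis (t * (0 + c * x)) = cis ((c * t) * x)" by (simp add: mult_ac)
    show "complex_of_real (\<psi> (2 powr (- real_of_int k) * (0 + c * x))) * cis (t * (0 + c * x))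
      = complex_of_real (\<psi> x) * cis ((c * t) * x)" by (simp only: A B)
  qed
  finally have e: "(LINT u|lborel. complex_of_real (\<psi> (2 powr (- real_of_int k) * u)) * cis (t * u))
      = c *\<^sub>R (LINT x|lborel. complex_of_real (\<psi> x) * cis ((c * t) * x))" using c0 by simp
  show ?thesis
    unfolding phi_k_def inv_fourier_def psi_k_def e c_def[symmetric]
    by (simp add: scaleR_conv_of_real mult_ac)
qed

lemma phi_integrable: "integrable lborel (phi_k \<psi> k)"
proof -
  have "integrable lborel (\<lambda>t. phi_k \<psi> 0 (0 + 2 powr real_of_int k * t))"
    by (rule lborel_integrable_real_affine[OF phi0_integrable[OF adm]]) simp
  hence "integrable lborel (\<lambda>t. complex_of_real (2 powr real_of_int k) * phi_k \<psi> 0 (2 powr real_of_int k * t))"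
    by simp
  thus ?thesis by (subst phi_scale[abs_def]) simp
qed

lemma phi_meas[measurable]: "phi_k \<psi> k \<in> borel_measurable borel"
proof -
  have e: "phi_k \<psi> k = (\<lambda>t. complex_of_real (2 powr real_of_int k) * phi_k \<psi> 0 (2 powr real_of_int k * t))"
    by (rule ext, rule phi_scale)
  have [measurable]: "phi_k \<psi> 0 \<in> borel_measurable borel" by (rule phi0_meas[OF adm])
  show ?thesis unfolding e by measurable
qed

lemma phi_L1: "L1_norm (phi_k \<psi> k) = L1_norm (phi_k \<psi> 0)"
proof -
  define c where "c = 2 powr real_of_int k"
  have c0: "c > 0" by (simp add: c_def)
  have "L1_norm (phi_k \<psi> 0) = \<bar>c\<bar> *\<^sub>R (LINT t|lborel. norm (phi_k \<psi> 0 (0 + c * t)))"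
    unfolding L1_norm_def
    using lborel_integral_real_affine[of c "\<lambda>t. norm (phi_k \<psi> 0 t)" 0] c0 by simp
  also have "\<dots> = (LINT t|lborel. norm (phi_k \<psi> k t))"
    unfolding phi_scale[of k] c_def[symmetric] using c0 by (simp add: norm_mult)
  finally show ?thesis unfolding L1_norm_def by simp
qed

lemma psi_bounded: "\<exists>M. \<forall>t. \<bar>\<psi> t\<bar> \<le> M"
proof -
  have "bounded (\<psi> ` {0..3})"
    by (rule compact_imp_bounded[OF compact_continuous_image[OF psi_cont[OF adm] compact_Icc]])
  then obtain M where M: "\<forall>x\<in>\<psi> ` {0..3}. norm x \<le> M" unfolding bounded_iff by blast
  show ?thesis
  proof (rule exI[of _ M], rule allI)
    fix t
    show "\<bar>\<psi> t\<bar> \<le> M"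
    proof (cases "t \<in> {0..3}")
      case True thus ?thesis using M by auto
    next
      case False
      hence "\<psi> t = 0" using psi_zero[OF adm, of t] by auto
      moreover have "M \<ge> 0" using M[rule_format, of "\<psi> 0"] by auto
      ultimately show ?thesis by simp
    qed
  qed
qed

lemma psi_integrable: "integrable lborel (\<lambda>u. complex_of_real (\<psi> u))"
proof -
  have c: "continuous_on {0..3} (\<lambda>u. complex_of_real (\<psi> u))"
    by (intro continuous_intros psi_cont[OF adm])
  have z: "u \<notin> {0..3} \<Longrightarrow> complex_of_real (\<psi> u) = 0" for u
    using psi_zero[OF adm, of u] by auto
  show ?thesis using lint_to_int(1)[OF c z] .
qed

lemma fourier_phi: "fourier (phi_k \<psi> k) u = complex_of_real (psi_k \<psi> k u)"
proof -
  obtain M where M: "\<And>t. \<bar>\<psi> t\<bar> \<le> M" using psi_bounded by blast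
  have gi: "integrable lborel (\<lambda>u. complex_of_real (psi_k \<psi> k u))"
  proof -
    have "integrable lborel (\<lambda>u. complex_of_real (\<psi> (0 + 2 powr (- real_of_int k) * u)))"
      using lborel_integrable_real_affine[OF psi_integrable, of "2 powr (- real_of_int k)" 0] by simp
    thus ?thesis unfolding psi_k_def by simp
  qed
  show ?thesis unfolding phi_k_def
  proof (rule inversion[where M=M])
    show "(\<lambda>u. complex_of_real (psi_k \<psi> k u)) \<in> borel_measurable borel"
      unfolding psi_k_def by measurable
    show "integrable lborel (\<lambda>u. complex_of_real (psi_k \<psi> k u))" by (rule gi)
    show "isCont (\<lambda>u. complex_of_real (psi_k \<psi> k u)) u"
      unfolding psi_k_def by (intro continuous_intros isCont_o2[OF _ psi_isCont[OF adm]])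
    show "norm (complex_of_real (psi_k \<psi> k t)) \<le> M" for t
      unfolding psi_k_def using M by simp
    show "integrable lborel (inv_fourier (\<lambda>u. complex_of_real (psi_k \<psi> k u)))"
      using phi_integrable[of k] unfolding phi_k_def .
  qed
qed

end

declare psi_meas'[measurable del] phi_meas[measurable del]

lemma bdd_mult_int:
  fixes g \<phi> :: "real \<Rightarrow> complex"
  assumes [measurable]: "g \<in> borel_measurable borel" and gb: "\<And>t. norm (g t) \<le> M"
    and pi: "integrable lborel \<phi>"
  shows "integrable lborel (\<lambda>t. g t * \<phi> t)"
proof (rule Bochner_Integration.integrable_bound[where f="\<lambda>t. M * norm (\<phi> t)"])
  show "integrable lborel (\<lambda>t. M * norm (\<phi> t))" using pi by simp
  have [measurable]: "\<phi> \<in> borel_measurable lborel" using pi by auto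
  show "(\<lambda>t. g t * \<phi> t) \<in> borel_measurable lborel" by measurable
  show "AE t in lborel. norm (g t * \<phi> t) \<le> norm (M * norm (\<phi> t))"
  proof (rule AE_I2)
    fix t
    have M0: "M \<ge> 0" using gb[of t] norm_ge_zero order_trans by blast
    have "norm (g t * \<phi> t) \<le> M * norm (\<phi> t)"
      by (simp add: norm_mult mult_right_mono gb)
    thus "norm (g t * \<phi> t) \<le> norm (M * norm (\<phi> t))" using M0 by simp
  qed
qed

lemma shift_int:
  fixes \<phi> :: "real \<Rightarrow> complex"
  assumes pi: "integrable lborel \<phi>"
  shows "integrable lborel (\<lambda>r. \<phi> (r - t))" "(LINT r|lborel. norm (\<phi> (r - t))) = (LINT r|lborel. norm (\<phi> r))"
proof -
  show "integrable lborel (\<lambda>r. \<phi> (r - t))"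
    using lborel_integrable_real_affine[OF pi, of 1 "-t"] by simp
  show "(LINT r|lborel. norm (\<phi> (r - t))) = (LINT r|lborel. norm (\<phi> r))"
    using lborel_integral_real_affine[of 1 "\<lambda>r. norm (\<phi> r)" "-t"] by simp
qed

lemma conv_meas[measurable]:
  fixes F \<phi> :: "real \<Rightarrow> complex"
  assumes [measurable]: "F \<in> borel_measurable borel" "\<phi> \<in> borel_measurable borel"
  shows "conv F \<phi> \<in> borel_measurable borel"
proof -
  have "(\<lambda>(x,t). F (x - t) * \<phi> t) \<in> borel_measurable (borel \<Otimes>\<^sub>M lborel)"
    by measurable
  hence "(\<lambda>x. LINT t|lborel. F (x - t) * \<phi> t) \<in> borel_measurable borel"
    using lborel.borel_measurable_lebesgue_integral[of "\<lambda>x t. F (x - t) * \<phi> t" borel] by simp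
  thus ?thesis unfolding conv_def[abs_def] .
qed

lemma fubini_lborel2:
  fixes f :: "real \<Rightarrow> real \<Rightarrow> complex" and a :: "real \<Rightarrow> real"
  assumes m[measurable]: "(\<lambda>(x,y). f x y) \<in> borel_measurable (lborel \<Otimes>\<^sub>M lborel)"
    and ai: "integrable lborel a"
    and inty: "\<And>x. integrable lborel (\<lambda>y. f x y)"
    and bd: "\<And>x. (LINT y|lborel. norm (f x y)) \<le> a x"
  shows "(LINT x|lborel. LINT y|lborel. f x y) = (LINT y|lborel. LINT x|lborel. f x y)"
proof -
  have fi: "integrable (lborel \<Otimes>\<^sub>M lborel) (\<lambda>(x,y). f x y)"
  proof (rule lborel_pair.Fubini_integrable)
    show "(\<lambda>(x,y). f x y) \<in> borel_measurable (lborel \<Otimes>\<^sub>M lborel)" by (rule m)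
    show "integrable lborel (\<lambda>x. LINT y|lborel. norm ((\<lambda>(x,y). f x y) (x, y)))"
    proof (rule Bochner_Integration.integrable_bound[OF ai])
      have "(\<lambda>(x,y). norm (f x y)) \<in> borel_measurable (lborel \<Otimes>\<^sub>M lborel)" by measurable
      hence "(\<lambda>x. LINT y|lborel. norm (f x y)) \<in> borel_measurable lborel"
        using lborel.borel_measurable_lebesgue_integral[of "\<lambda>x y. norm (f x y)" lborel] by simp
      thus "(\<lambda>x. LINT y|lborel. norm ((\<lambda>(x,y). f x y) (x, y))) \<in> borel_measurable lborel" by simp
      show "AE x in lborel. norm (LINT y|lborel. norm ((\<lambda>(x,y). f x y) (x, y))) \<le> norm (a x)"
      proof (rule AE_I2)
        fix x
        have "0 \<le> (LINT y|lborel. norm (f x y))" by simp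
        thus "norm (LINT y|lborel. norm ((\<lambda>(x,y). f x y) (x, y))) \<le> norm (a x)"
          using bd[of x] by simp
      qed
    qed
    show "AE x in lborel. integrable lborel (\<lambda>y. (\<lambda>(x,y). f x y) (x, y))" using inty by simp
  qed
  show ?thesis using lborel_pair.Fubini_integral[OF fi] by simp
qed

lemma conv_inv:
  fixes g h :: "real \<Rightarrow> complex"
  assumes gm[measurable]: "g \<in> borel_measurable borel" and gi: "integrable lborel g"
    and hm[measurable]: "h \<in> borel_measurable borel" and hi: "integrable lborel h"
    and gh: "\<And>u. g u * fourier h u = g u"
  shows "conv (inv_fourier g) h x = inv_fourier g x"
proof -
  let ?K = "\<lambda>t u. g u * cis ((x - t) * u) * h t"
  have 1: "inv_fourier g (x - t) * h t = complex_of_real (1/(2*pi)) * (LINT u|lborel. ?K t u)" for t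
  proof -
    have "inv_fourier g (x - t) * h t = complex_of_real (1/(2*pi)) * ((LINT u|lborel. g u * cis ((x - t) * u)) * h t)"
      unfolding inv_fourier_def by (simp only: mult.assoc)
    also have "(LINT u|lborel. g u * cis ((x - t) * u)) * h t = (LINT u|lborel. ?K t u)"
      by simp
    finally show ?thesis .
  qed
  have fub: "(LINT t|lborel. LINT u|lborel. ?K t u) = (LINT u|lborel. LINT t|lborel. ?K t u)"
  proof (rule fubini_lborel(2)[where a="\<lambda>t. norm (h t)" and b="\<lambda>u. norm (g u)"])
    show "(\<lambda>(t,u). ?K t u) \<in> borel_measurable (lborel \<Otimes>\<^sub>M lborel)" by measurable
    show "integrable lborel (\<lambda>t. norm (h t))" using hi by simp
    show "integrable lborel (\<lambda>u. norm (g u))" using gi by simp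
    show "norm (?K t u) \<le> norm (h t) * norm (g u)" for t u by (simp add: norm_mult)
  qed auto
  have 2: "(LINT t|lborel. ?K t u) = g u * cis (x * u)" for u
  proof -
    have c: "cis ((x - t) * u) = cis (x * u) * cis (- (t * u))" for t
      by (simp add: cis_mult left_diff_distrib)
    have "(LINT t|lborel. ?K t u) = (LINT t|lborel. (g u * cis (x * u)) * (h t * cis (- (t * u))))"
    proof (rule Bochner_Integration.integral_cong[OF refl])
      fix t
      show "?K t u = (g u * cis (x * u)) * (h t * cis (- (t * u)))"
        unfolding c by (simp only: mult_ac)
    qed
    also have "\<dots> = (g u * cis (x * u)) * fourier h u"
      unfolding fourier_def by simp
    also have "\<dots> = (g u * fourier h u) * cis (x * u)" by (simp only: mult_ac)
    also have "\<dots> = g u * cis (x * u)" by (simp only: gh)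
    finally show ?thesis .
  qed
  have "conv (inv_fourier g) h x = (LINT t|lborel. inv_fourier g (x - t) * h t)"
    by (rule conv_def)
  also have "\<dots> = (LINT t|lborel. complex_of_real (1/(2*pi)) * (LINT u|lborel. ?K t u))"
    by (simp only: 1)
  also have "\<dots> = complex_of_real (1/(2*pi)) * (LINT t|lborel. LINT u|lborel. ?K t u)"
    by simp
  also have "\<dots> = complex_of_real (1/(2*pi)) * (LINT u|lborel. g u * cis (x * u))"
    by (simp only: fub 2)
  also have "\<dots> = inv_fourier g x" by (simp add: inv_fourier_def)
  finally show ?thesis .
qed

lemma conv_assoc:
  fixes F \<phi> h :: "real \<Rightarrow> complex"
  assumes Fm[measurable]: "F \<in> borel_measurable borel" and Fb: "\<And>x. norm (F x) \<le> M"
    and pm[measurable]: "\<phi> \<in> borel_measurable borel" and pi: "integrable lborel \<phi>"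
    and hm[measurable]: "h \<in> borel_measurable borel" and hi: "integrable lborel h"
  shows "conv (conv F \<phi>) h x = conv F (conv \<phi> h) x"
proof -
  have M0: "M \<ge> 0" using Fb[of 0] norm_ge_zero order_trans by blast
  let ?L = "LINT r|lborel. norm (\<phi> r)"
  have 1: "conv F \<phi> (x - t) = (LINT r|lborel. F (x - r) * \<phi> (r - t))" for t
  proof -
    have "conv F \<phi> (x - t) = (LINT s|lborel. F (x - t - s) * \<phi> s)" by (rule conv_def)
    also have "\<dots> = (LINT r|lborel. F (x - t - (-t + 1 * r)) * \<phi> (-t + 1 * r))"
      using lborel_integral_real_affine[of 1 "\<lambda>s. F (x - t - s) * \<phi> s" "-t"] by simp
    also have "\<dots> = (LINT r|lborel. F (x - r) * \<phi> (r - t))" by simp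
    finally show ?thesis .
  qed
  have "conv (conv F \<phi>) h x = (LINT t|lborel. conv F \<phi> (x - t) * h t)"
    by (rule conv_def)
  also have "\<dots> = (LINT t|lborel. (LINT r|lborel. F (x - r) * \<phi> (r - t)) * h t)"
    by (simp only: 1)
  also have "\<dots> = (LINT t|lborel. LINT r|lborel. F (x - r) * \<phi> (r - t) * h t)"
    by simp
  also have "\<dots> = (LINT r|lborel. LINT t|lborel. F (x - r) * \<phi> (r - t) * h t)"
  proof (rule fubini_lborel2[where a="\<lambda>t. M * ?L * norm (h t)"])
    show "(\<lambda>(t,r). F (x - r) * \<phi> (r - t) * h t) \<in> borel_measurable (lborel \<Otimes>\<^sub>M lborel)"
      by measurable
    show "integrable lborel (\<lambda>t. M * ?L * norm (h t))" using hi by simp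
    fix t
    have i1: "integrable lborel (\<lambda>r. F (x - r) * \<phi> (r - t))"
      by (rule bdd_mult_int[OF _ Fb shift_int(1)[OF pi]]) measurable
    thus "integrable lborel (\<lambda>r. F (x - r) * \<phi> (r - t) * h t)" by simp
    have "(LINT r|lborel. norm (F (x - r) * \<phi> (r - t) * h t))
        \<le> (LINT r|lborel. M * norm (\<phi> (r - t)) * norm (h t))"
    proof (rule integral_mono)
      show "integrable lborel (\<lambda>r. norm (F (x - r) * \<phi> (r - t) * h t))" using i1 by simp
      show "integrable lborel (\<lambda>r. M * norm (\<phi> (r - t)) * norm (h t))"
        using shift_int(1)[OF pi, of t] by simp
      show "norm (F (x - r) * \<phi> (r - t) * h t) \<le> M * norm (\<phi> (r - t)) * norm (h t)" for r
        by (simp add: norm_mult Fb mult_right_mono)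
    qed
    also have "\<dots> = M * ?L * norm (h t)"
      using shift_int(2)[OF pi, of t] by simp
    finally show "(LINT r|lborel. norm (F (x - r) * \<phi> (r - t) * h t)) \<le> M * ?L * norm (h t)" .
  qed
  also have "\<dots> = (LINT r|lborel. F (x - r) * conv \<phi> h r)"
  proof (rule Bochner_Integration.integral_cong[OF refl])
    fix r
    have "(LINT t|lborel. F (x - r) * \<phi> (r - t) * h t) = (LINT t|lborel. F (x - r) * (\<phi> (r - t) * h t))"
      by (simp only: mult.assoc)
    also have "\<dots> = F (x - r) * (LINT t|lborel. \<phi> (r - t) * h t)"
      by (rule integral_mult_right_zero)
    finally show "(LINT t|lborel. F (x - r) * \<phi> (r - t) * h t) = F (x - r) * conv \<phi> h r"
      by (simp only: conv_def)
  qed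
  also have "\<dots> = conv F (conv \<phi> h) x" by (simp add: conv_def)
  finally show ?thesis .
qed


lemma BUC_meas: "F \<in> BUC \<Longrightarrow> F \<in> borel_measurable borel"
  unfolding BUC_def by (auto intro: borel_measurable_continuous_onI uniformly_continuous_imp_continuous)

lemma BUC_bound: "F \<in> BUC \<Longrightarrow> \<exists>M. \<forall>x. norm (F x) \<le> M"
  unfolding BUC_def bounded_iff by auto

lemma L1_nonneg: "L1_norm h \<ge> 0"
  unfolding L1_norm_def by simp

lemma conv_bound:
  fixes F \<phi> :: "real \<Rightarrow> complex"
  assumes Fm[measurable]: "F \<in> borel_measurable borel" and Fb: "\<And>x. norm (F x) \<le> M"
    and pi: "integrable lborel \<phi>"
  shows "norm (conv F \<phi> x) \<le> M * L1_norm \<phi>"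
proof -
  have i: "integrable lborel (\<lambda>t. F (x - t) * \<phi> t)"
    by (rule bdd_mult_int[OF _ Fb pi]) measurable
  have "norm (conv F \<phi> x) \<le> (LINT t|lborel. norm (F (x - t) * \<phi> t))"
    unfolding conv_def by (rule integral_norm_bound)
  also have "\<dots> \<le> (LINT t|lborel. M * norm (\<phi> t))"
  proof (rule integral_mono)
    show "integrable lborel (\<lambda>t. norm (F (x - t) * \<phi> t))" using i by simp
    show "integrable lborel (\<lambda>t. M * norm (\<phi> t))" using pi by simp
    show "norm (F (x - t) * \<phi> t) \<le> M * norm (\<phi> t)" for t
      by (simp add: norm_mult Fb mult_right_mono)
  qed
  also have "\<dots> = M * L1_norm \<phi>" by (simp add: L1_norm_def)
  finally show ?thesis .
qed

lemma conv_BUC: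
  fixes F \<phi> :: "real \<Rightarrow> complex"
  assumes F: "F \<in> BUC" and pm[measurable]: "\<phi> \<in> borel_measurable borel" and pi: "integrable lborel \<phi>"
  shows "conv F \<phi> \<in> BUC"
proof -
  have Fm[measurable]: "F \<in> borel_measurable borel" by (rule BUC_meas[OF F])
  obtain M where Fb: "\<And>x. norm (F x) \<le> M" using BUC_bound[OF F] by blast
  have uc: "uniformly_continuous_on UNIV F" using F by (simp add: BUC_def)
  have "bounded (range (conv F \<phi>))"
    unfolding bounded_iff using conv_bound[OF Fm Fb pi] by blast
  moreover have "uniformly_continuous_on UNIV (conv F \<phi>)"
    unfolding uniformly_continuous_on_def
  proof (intro allI impI)
    fix e :: real assume e: "e > 0"
    define L where "L = L1_norm \<phi>"
    have L0: "L \<ge> 0" unfolding L_def by (rule L1_nonneg)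
    define e' where "e' = e / (L + 1)"
    have e': "e' > 0" using e L0 by (simp add: e'_def)
    obtain d where d: "d > 0" and dd: "\<And>x x'. dist x' x < d \<Longrightarrow> dist (F x') (F x) < e'"
      using uc e' unfolding uniformly_continuous_on_def by blast
    show "\<exists>d>0. \<forall>x\<in>UNIV. \<forall>x'\<in>UNIV. dist x' x < d \<longrightarrow> dist (conv F \<phi> x') (conv F \<phi> x) < e"
    proof (intro exI[of _ d] conjI ballI impI d)
      fix x x' :: real assume dx: "dist x' x < d"
      have i1: "integrable lborel (\<lambda>t. F (x' - t) * \<phi> t)"
        by (rule bdd_mult_int[OF _ Fb pi]) measurable
      have i2: "integrable lborel (\<lambda>t. F (x - t) * \<phi> t)"
        by (rule bdd_mult_int[OF _ Fb pi]) measurable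
      have "dist (conv F \<phi> x') (conv F \<phi> x) = norm (LINT t|lborel. F (x' - t) * \<phi> t - F (x - t) * \<phi> t)"
        unfolding dist_norm conv_def using i1 i2 by simp
      also have "\<dots> \<le> (LINT t|lborel. norm (F (x' - t) * \<phi> t - F (x - t) * \<phi> t))"
        by (rule integral_norm_bound)
      also have "\<dots> \<le> (LINT t|lborel. e' * norm (\<phi> t))"
      proof (rule integral_mono)
        show "integrable lborel (\<lambda>t. norm (F (x' - t) * \<phi> t - F (x - t) * \<phi> t))"
          using i1 i2 by simp
        show "integrable lborel (\<lambda>t. e' * norm (\<phi> t))" using pi by simp
        fix t
        have "dist (x' - t) (x - t) < d" using dx by (simp add: dist_real_def)
        hence "dist (F (x' - t)) (F (x - t)) < e'" by (rule dd)
        hence "norm (F (x' - t) - F (x - t)) \<le> e'" by (simp add: dist_norm)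
        hence "norm (F (x' - t) - F (x - t)) * norm (\<phi> t) \<le> e' * norm (\<phi> t)"
          by (rule mult_right_mono) simp
        thus "norm (F (x' - t) * \<phi> t - F (x - t) * \<phi> t) \<le> e' * norm (\<phi> t)"
          by (simp add: left_diff_distrib[symmetric] norm_mult)
      qed
      also have "\<dots> = e' * L" by (simp add: L_def L1_norm_def)
      also have "\<dots> < e"
      proof -
        have "e' * L < e' * (L + 1)" using e' by simp
        also have "e' * (L + 1) = e" using L0 by (simp add: e'_def)
        finally show ?thesis .
      qed
      finally show "dist (conv F \<phi> x') (conv F \<phi> x) < e" .
    qed
  qed
  ultimately show ?thesis by (simp add: BUC_def)
qed

lemma conv_C0:
  fixes F \<phi> :: "real \<Rightarrow> complex"
  assumes F: "F \<in> BUC" "F \<in> C0" and pm[measurable]: "\<phi> \<in> borel_measurable borel" and pi: "integrable lborel \<phi>"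
  shows "conv F \<phi> \<in> C0"
proof -
  have Fm[measurable]: "F \<in> borel_measurable borel" by (rule BUC_meas[OF F(1)])
  obtain M where Fb: "\<And>x. norm (F x) \<le> M" using BUC_bound[OF F(1)] by blast
  have cont: "continuous_on UNIV (conv F \<phi>)"
    using conv_BUC[OF F(1) pm pi] by (auto simp: BUC_def intro: uniformly_continuous_imp_continuous)
  have Ftop: "(F \<longlongrightarrow> 0) at_top" and Fbot: "(F \<longlongrightarrow> 0) at_bot" using F(2) by (auto simp: C0_def)
  have lim: "((\<lambda>x. conv F \<phi> (c * x)) \<longlongrightarrow> 0) at_top" if s: "c = 1 \<or> c = -1" "(\<lambda>y. F (c * y)) \<in> {G. (G \<longlongrightarrow> 0) at_top}" for c
  proof -
    have G: "((\<lambda>y. F (c * y)) \<longlongrightarrow> 0) at_top" using s(2) by simp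
    have h1: "(\<lambda>t. 0::complex) \<in> borel_measurable lborel" by simp
    have h2: "\<And>x. (\<lambda>t. F (c * x - t) * \<phi> t) \<in> borel_measurable lborel" by measurable
    have h3: "integrable lborel (\<lambda>t. M * norm (\<phi> t))" using pi by simp
    have h4: "AE t in lborel. ((\<lambda>x. F (c * x - t) * \<phi> t) \<longlongrightarrow> 0) at_top"
    proof (rule AE_I2)
      fix t
      have ss: "c * c = 1" using s(1) by auto
      have "filterlim (\<lambda>x. - (c * t) + x) at_top at_top"
        by (rule filterlim_tendsto_add_at_top[OF tendsto_const filterlim_ident])
      hence "((\<lambda>x. F (c * (- (c * t) + x))) \<longlongrightarrow> 0) at_top"
        by (rule filterlim_compose[OF G])
      moreover have "c * (- (c * t) + x) = c * x - t" for x
        using ss by (simp add: algebra_simps mult.assoc[symmetric])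
      ultimately have "((\<lambda>x. F (c * x - t)) \<longlongrightarrow> 0) at_top" by simp
      thus "((\<lambda>x. F (c * x - t) * \<phi> t) \<longlongrightarrow> 0) at_top"
        by (rule tendsto_mult_left_zero)
    qed
    have h5: "\<forall>\<^sub>F x in at_top. AE t in lborel. norm (F (c * x - t) * \<phi> t) \<le> M * norm (\<phi> t)"
      by (intro always_eventually allI AE_I2) (simp add: norm_mult Fb mult_right_mono)
    have "((\<lambda>x. LINT t|lborel. F (c * x - t) * \<phi> t) \<longlongrightarrow> (LINT t|lborel. (0::complex))) at_top"
      using integral_dominated_convergence_at_top[OF h1 h2 h3 h4 h5] by simp
    thus ?thesis by (simp add: conv_def)
  qed
  have "((\<lambda>x. conv F \<phi> (1 * x)) \<longlongrightarrow> 0) at_top"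
    by (rule lim) (use Ftop in auto)
  hence top: "(conv F \<phi> \<longlongrightarrow> 0) at_top" by simp
  have "((\<lambda>y. F (- y)) \<longlongrightarrow> 0) at_top" using Fbot filterlim_at_bot_mirror by blast
  hence "((\<lambda>x. conv F \<phi> ((-1) * x)) \<longlongrightarrow> 0) at_top"
    by (intro lim) auto
  hence "((\<lambda>x. conv F \<phi> (- x)) \<longlongrightarrow> 0) at_top" by simp
  hence bot: "(conv F \<phi> \<longlongrightarrow> 0) at_bot" using filterlim_at_bot_mirror by blast
  show ?thesis using cont top bot by (simp add: C0_def)
qed


context
  fixes \<psi> :: "real \<Rightarrow> real"
  assumes adm: "admissible \<psi>"
begin

lemma phi_meas'[measurable]: "phi_k \<psi> k \<in> borel_measurable borel"
  by (rule phi_meas[OF adm])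

lemma psi_meas''[measurable]: "\<psi> \<in> borel_measurable borel"
  by (rule psi_meas[OF adm])

definition chi :: "int \<Rightarrow> real \<Rightarrow> complex" where
  "chi k t = phi_k \<psi> (k - 1) t + phi_k \<psi> k t + phi_k \<psi> (k + 1) t"

lemma chi_integrable: "integrable lborel (chi k)"
  unfolding chi_def[abs_def] using phi_integrable[OF adm] by simp

lemma chi_meas[measurable]: "chi k \<in> borel_measurable borel"
  unfolding chi_def[abs_def] by measurable

lemma psi_k_integrable: "integrable lborel (\<lambda>u. complex_of_real (psi_k \<psi> k u))"
proof -
  have "integrable lborel (\<lambda>u. complex_of_real (\<psi> (0 + 2 powr (- real_of_int k) * u)))"
    using lborel_integrable_real_affine[OF psi_integrable[OF adm], of "2 powr (- real_of_int k)" 0] by simp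
  thus ?thesis unfolding psi_k_def by simp
qed

lemma fourier_add3:
  fixes a b c :: "real \<Rightarrow> complex"
  assumes "integrable lborel a" "integrable lborel b" "integrable lborel c"
  shows "fourier (\<lambda>t. a t + b t + c t) u = fourier a u + fourier b u + fourier c u"
proof -
  have i: "integrable lborel (\<lambda>t. f t * cis (- (t * u)))" if "integrable lborel f" for f :: "real \<Rightarrow> complex"
  proof -
    have "integrable lborel (\<lambda>t. cis (- (t * u)) * f t)"
      by (rule bdd_mult_int[OF _ _ that, of _ 1]) auto
    thus ?thesis by (simp add: mult.commute)
  qed
  let ?e = "\<lambda>t. cis (- (t * u))"
  have ia: "integrable lborel (\<lambda>t. a t * ?e t)" by (rule i[OF assms(1)])
  have ib: "integrable lborel (\<lambda>t. b t * ?e t)" by (rule i[OF assms(2)])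
  have ic: "integrable lborel (\<lambda>t. c t * ?e t)" by (rule i[OF assms(3)])
  have "(LINT t|lborel. (a t + b t + c t) * ?e t) = (LINT t|lborel. (a t * ?e t + b t * ?e t) + c t * ?e t)"
    by (simp only: distrib_right)
  also have "\<dots> = (LINT t|lborel. a t * ?e t + b t * ?e t) + (LINT t|lborel. c t * ?e t)"
    by (rule Bochner_Integration.integral_add[OF Bochner_Integration.integrable_add[OF ia ib] ic])
  also have "(LINT t|lborel. a t * ?e t + b t * ?e t) = (LINT t|lborel. a t * ?e t) + (LINT t|lborel. b t * ?e t)"
    by (rule Bochner_Integration.integral_add[OF ia ib])
  finally show ?thesis unfolding fourier_def .
qed

lemma fourier_chi: "fourier (chi k) u = complex_of_real (psi_k \<psi> (k - 1) u + psi_k \<psi> k u + psi_k \<psi> (k + 1) u)"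
  unfolding chi_def[abs_def]
  by (simp add: fourier_add3 phi_integrable[OF adm] fourier_phi[OF adm])

lemma chi_H1: "chi k \<in> H1"
proof -
  have "psi_k \<psi> j u = 0" if "u \<le> 0" for j u
    unfolding psi_k_def
  proof (rule psi_zero[OF adm])
    have "2 powr (- real_of_int j) * u \<le> 0" using that by (simp add: mult_nonneg_nonpos)
    thus "2 powr (- real_of_int j) * u < 1/2 \<or> 2 powr (- real_of_int j) * u > 2" by simp
  qed
  thus ?thesis unfolding H1_def using chi_integrable[of k] by (auto simp: fourier_chi)
qed

lemma partition:
  "psi_k \<psi> k u * (psi_k \<psi> (k - 1) u + psi_k \<psi> k u + psi_k \<psi> (k + 1) u) = psi_k \<psi> k u"
proof -
  define s where "s = 2 powr (- real_of_int k) * u"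
  have a: "psi_k \<psi> (k - 1) u = \<psi> (2 * s)"
  proof -
    have "2 powr (- real_of_int (k - 1)) = 2 powr (1 + (- real_of_int k))" by simp
    also have "\<dots> = 2 * 2 powr (- real_of_int k)" by (simp only: powr_add powr_one)
    finally have eq: "2 powr (- real_of_int (k - 1)) = 2 * 2 powr (- real_of_int k)" .
    have arg: "2 powr (- real_of_int (k - 1)) * u = 2 * (2 powr (- real_of_int k) * u)"
      by (subst eq) (rule mult.assoc)
    show ?thesis unfolding psi_k_def s_def arg ..
  qed
  have b: "psi_k \<psi> (k + 1) u = \<psi> (s / 2)"
  proof -
    have "2 powr (- real_of_int (k + 1)) = 2 powr ((- real_of_int k) - 1)" by simp
    also have "\<dots> = 2 powr (- real_of_int k) / 2" by (simp only: powr_diff powr_one)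
    finally have eq: "2 powr (- real_of_int (k + 1)) = 2 powr (- real_of_int k) / 2" .
    have arg: "2 powr (- real_of_int (k + 1)) * u = 2 powr (- real_of_int k) * u / 2"
      by (subst eq) simp
    show ?thesis unfolding psi_k_def s_def arg ..
  qed
  have c: "psi_k \<psi> k u = \<psi> s" unfolding psi_k_def s_def ..
  show ?thesis
  proof (cases "\<psi> s = 0")
    case True thus ?thesis by (simp add: c)
  next
    case False
    hence s: "1/2 < s \<and> s < 2" using psi_zero'[OF adm, of s] by linarith
    have "\<psi> (2 * s) + \<psi> s + \<psi> (s / 2) = 1"
    proof (cases "s \<ge> 1")
      case True
      have "\<psi> s + \<psi> (s/2) = 1" using psi_part[OF adm, of s] True s by auto
      moreover have "\<psi> (2 * s) = 0" using psi_zero'[OF adm, of "2 * s"] True by auto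
      ultimately show ?thesis by simp
    next
      case False
      have "\<psi> (2 * s) + \<psi> (2 * s/2) = 1" using psi_part[OF adm, of "2 * s"] False s by auto
      moreover have "\<psi> (s/2) = 0" using psi_zero'[OF adm, of "s/2"] False by auto
      ultimately show ?thesis by simp
    qed
    thus ?thesis by (simp add: a b c)
  qed
qed

lemma conv_phi_chi: "conv (phi_k \<psi> k) (chi k) x = phi_k \<psi> k x"
  unfolding phi_k_def
proof (rule conv_inv)
  show "(\<lambda>u. complex_of_real (psi_k \<psi> k u)) \<in> borel_measurable borel"
    unfolding psi_k_def by measurable
  show "integrable lborel (\<lambda>u. complex_of_real (psi_k \<psi> k u))" by (rule psi_k_integrable)
  show "chi k \<in> borel_measurable borel" by measurable
  show "integrable lborel (chi k)" by (rule chi_integrable)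
  fix u
  show "complex_of_real (psi_k \<psi> k u) * fourier (chi k) u = complex_of_real (psi_k \<psi> k u)"
    unfolding fourier_chi of_real_mult[symmetric] partition ..
qed

lemma chi_L1: "L1_norm (chi k) \<le> 3 * L1_norm (phi_k \<psi> 0)"
proof -
  let ?n = "\<lambda>j t. norm (phi_k \<psi> j t)"
  have i: "integrable lborel (?n j)" for j
    using phi_integrable[OF adm, of j] by (rule integrable_norm)
  have ic: "integrable lborel (\<lambda>t. norm (chi k t))"
    using chi_integrable[of k] by (rule integrable_norm)
  have is2: "integrable lborel (\<lambda>t. ?n (k - 1) t + ?n k t)"
    by (rule Bochner_Integration.integrable_add[OF i i])
  have is3: "integrable lborel (\<lambda>t. ?n (k - 1) t + ?n k t + ?n (k + 1) t)"
    by (rule Bochner_Integration.integrable_add[OF is2 i])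
  have nb: "norm (chi k t) \<le> ?n (k - 1) t + ?n k t + ?n (k + 1) t" for t
    unfolding chi_def by (rule order_trans[OF norm_triangle_ineq add_right_mono[OF norm_triangle_ineq]])
  have "L1_norm (chi k) = (LINT t|lborel. norm (chi k t))" by (simp only: L1_norm_def)
  also have "\<dots> \<le> (LINT t|lborel. ?n (k - 1) t + ?n k t + ?n (k + 1) t)"
    by (rule integral_mono[OF ic is3 nb])
  also have "\<dots> = (LINT t|lborel. ?n (k - 1) t + ?n k t) + (LINT t|lborel. ?n (k + 1) t)"
    by (rule Bochner_Integration.integral_add[OF is2 i])
  also have "(LINT t|lborel. ?n (k - 1) t + ?n k t) = (LINT t|lborel. ?n (k - 1) t) + (LINT t|lborel. ?n k t)"
    by (rule Bochner_Integration.integral_add[OF i i])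
  finally have "L1_norm (chi k) \<le> (LINT t|lborel. ?n (k - 1) t) + (LINT t|lborel. ?n k t) + (LINT t|lborel. ?n (k + 1) t)" .
  moreover have L: "(LINT t|lborel. ?n j t) = L1_norm (phi_k \<psi> 0)" for j
    using phi_L1[OF adm, of j] by (simp only: L1_norm_def)
  ultimately show ?thesis by (simp only: L)
qed

lemma rep_term:
  assumes F: "F \<in> BUC"
  shows "conv (conv F (phi_k \<psi> k)) (chi k) x = conv F (phi_k \<psi> k) x"
proof -
  obtain M where Fb: "\<And>x. norm (F x) \<le> M" using BUC_bound[OF F] by blast
  have "conv (conv F (phi_k \<psi> k)) (chi k) x = conv F (conv (phi_k \<psi> k) (chi k)) x"
    by (rule conv_assoc[OF BUC_meas[OF F] Fb phi_meas' phi_integrable[OF adm] chi_meas chi_integrable])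
  also have "conv (phi_k \<psi> k) (chi k) = phi_k \<psi> k" by (rule ext, rule conv_phi_chi)
  finally show ?thesis .
qed

end

lemma sup_norm_nonneg:
  assumes "bounded (range f)"
  shows "sup_norm f \<ge> 0"
proof -
  obtain M where M: "\<And>x. norm (f x) \<le> M" using assms unfolding bounded_iff by blast
  have "bdd_above (range (\<lambda>x. norm (f x)))" using M by (intro bdd_aboveI) auto
  hence "norm (f 0) \<le> Sup (range (\<lambda>x. norm (f x)))" using cSUP_upper[of 0 UNIV "\<lambda>x. norm (f x)"] by simp
  thus ?thesis unfolding sup_norm_def using norm_ge_zero order_trans by blast
qed

lemma bij_int_decode': "bij_betw int_decode UNIV UNIV"
  using bij_int_decode by (simp add: bij_def bij_betw_def)

lemma A_norm_nonneg:
  assumes "F \<in> A_space S" and S: "S \<subseteq> BUC"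
  shows "A_norm S F \<ge> 0"
proof -
  have ne: "{(\<Sum>k. sup_norm (f k) * L1_norm (h k)) | f h. A_rep S F f h} \<noteq> {}"
    using assms unfolding A_space_def by blast
  show ?thesis unfolding A_norm_def
  proof (rule cInf_greatest[OF ne])
    fix y assume "y \<in> {(\<Sum>k. sup_norm (f k) * L1_norm (h k)) | f h. A_rep S F f h}"
    then obtain f h where y: "y = (\<Sum>k. sup_norm (f k) * L1_norm (h k))" and r: "A_rep S F f h" by blast
    have "\<And>k. 0 \<le> sup_norm (f k) * L1_norm (h k)"
    proof -
      fix k
      have "f k \<in> BUC" using r S unfolding A_rep_def by blast
      hence "sup_norm (f k) \<ge> 0" by (intro sup_norm_nonneg) (simp add: BUC_def)
      thus "0 \<le> sup_norm (f k) * L1_norm (h k)" using L1_nonneg by simp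
    qed
    thus "0 \<le> y" unfolding y by (rule suminf_nonneg[rotated]) (use r in \<open>simp add: A_rep_def\<close>)
  qed
qed

lemma A_norm_le:
  assumes r: "A_rep S F f h" and S: "S \<subseteq> BUC"
  shows "A_norm S F \<le> (\<Sum>k. sup_norm (f k) * L1_norm (h k))"
  unfolding A_norm_def
proof (rule cInf_lower)
  show "(\<Sum>k. sup_norm (f k) * L1_norm (h k)) \<in> {(\<Sum>k. sup_norm (f k) * L1_norm (h k)) | f h. A_rep S F f h}"
    using r by blast
  show "bdd_below {(\<Sum>k. sup_norm (f k) * L1_norm (h k)) | f h. A_rep S F f h}"
  proof (rule bdd_belowI[of _ 0])
    fix y assume "y \<in> {(\<Sum>k. sup_norm (f k) * L1_norm (h k)) | f h. A_rep S F f h}"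
    then obtain f h where y: "y = (\<Sum>k. sup_norm (f k) * L1_norm (h k))" and r: "A_rep S F f h" by blast
    have "\<And>k. 0 \<le> sup_norm (f k) * L1_norm (h k)"
    proof -
      fix k
      have "f k \<in> BUC" using r S unfolding A_rep_def by blast
      hence "sup_norm (f k) \<ge> 0" by (intro sup_norm_nonneg) (simp add: BUC_def)
      thus "0 \<le> sup_norm (f k) * L1_norm (h k)" using L1_nonneg by simp
    qed
    thus "0 \<le> y" unfolding y by (rule suminf_nonneg[rotated]) (use r in \<open>simp add: A_rep_def\<close>)
  qed
qed

context
  fixes \<psi> :: "real \<Rightarrow> real"
  assumes adm: "admissible \<psi>"
begin

lemma B_rep:
  assumes F: "F \<in> B_R \<psi>" and S: "\<And>k. conv F (phi_k \<psi> k) \<in> S"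
  shows "A_rep S F (\<lambda>n. conv F (phi_k \<psi> (int_decode n))) (\<lambda>n. chi \<psi> (int_decode n))"
    and "(\<Sum>n. sup_norm (conv F (phi_k \<psi> (int_decode n))) * L1_norm (chi \<psi> (int_decode n)))
         \<le> (3 * L1_norm (phi_k \<psi> 0)) * normB_R \<psi> F"
proof -
  let ?d = int_decode
  define a where "a k = sup_norm (conv F (phi_k \<psi> k))" for k
  define K0 where "K0 = 3 * L1_norm (phi_k \<psi> 0)"
  have FB: "F \<in> BUC" using F by (simp add: B_R_def)
  have cB: "conv F (phi_k \<psi> k) \<in> BUC" for k
    by (rule conv_BUC[OF FB phi_meas'[OF adm] phi_integrable[OF adm]])
  have a0: "a k \<ge> 0" for k
    unfolding a_def by (rule sup_norm_nonneg) (use cB[of k] in \<open>simp add: BUC_def\<close>)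
  have asum: "a summable_on UNIV" using F by (simp add: B_R_def a_def[abs_def])
  have "(\<lambda>n. a (?d n)) summable_on UNIV"
    using summable_on_reindex_bij_betw[OF bij_int_decode', of a] asum by simp
  hence "((\<lambda>n. a (?d n)) has_sum infsum (\<lambda>n. a (?d n)) UNIV) UNIV" by (rule has_sum_infsum)
  moreover have "infsum (\<lambda>n. a (?d n)) UNIV = normB_R \<psi> F"
    using infsum_reindex_bij_betw[OF bij_int_decode', of a] by (simp add: normB_R_def a_def[abs_def])
  ultimately have ads: "(\<lambda>n. a (?d n)) sums normB_R \<psi> F" by (simp add: has_sum_imp_sums)
  have tb: "norm (a (?d n) * L1_norm (chi \<psi> (?d n))) \<le> K0 * a (?d n)" for n
  proof -
    have "norm (a (?d n) * L1_norm (chi \<psi> (?d n))) = a (?d n) * L1_norm (chi \<psi> (?d n))"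
      using a0 L1_nonneg by simp
    also have "\<dots> \<le> a (?d n) * K0"
      unfolding K0_def by (rule mult_left_mono[OF chi_L1[OF adm] a0])
    finally show ?thesis by (simp add: mult.commute)
  qed
  have tb': "a (?d n) * L1_norm (chi \<psi> (?d n)) \<le> K0 * a (?d n)" for n
    using tb[of n] abs_ge_self order_trans unfolding real_norm_def by blast
  have ks: "(\<lambda>n. K0 * a (?d n)) sums (K0 * normB_R \<psi> F)" by (rule sums_mult[OF ads])
  have tsum: "summable (\<lambda>n. a (?d n) * L1_norm (chi \<psi> (?d n)))"
    by (rule summable_comparison_test'[OF sums_summable[OF ks] tb])
  show "A_rep S F (\<lambda>n. conv F (phi_k \<psi> (?d n))) (\<lambda>n. chi \<psi> (?d n))"
    unfolding A_rep_def
  proof (intro conjI allI)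
    show "conv F (phi_k \<psi> (?d k)) \<in> S" for k by (rule S)
    show "chi \<psi> (?d k) \<in> H1" for k by (rule chi_H1[OF adm])
    show "summable (\<lambda>k. sup_norm (conv F (phi_k \<psi> (?d k))) * L1_norm (chi \<psi> (?d k)))"
      using tsum by (simp add: a_def)
    fix x
    have "((\<lambda>k. conv F (phi_k \<psi> k) x) has_sum F x) UNIV" using F by (simp add: B_R_def)
    hence "((\<lambda>n. conv F (phi_k \<psi> (?d n)) x) has_sum F x) UNIV"
      using has_sum_reindex_bij_betw[OF bij_int_decode', of "\<lambda>k. conv F (phi_k \<psi> k) x"] by simp
    hence "(\<lambda>n. conv F (phi_k \<psi> (?d n)) x) sums F x" by (rule has_sum_imp_sums)
    thus "(\<lambda>n. conv (conv F (phi_k \<psi> (?d n))) (chi \<psi> (?d n)) x) sums F x"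
      by (simp add: rep_term[OF adm FB])
  qed
  have "(\<Sum>n. a (?d n) * L1_norm (chi \<psi> (?d n))) \<le> (\<Sum>n. K0 * a (?d n))"
    by (rule suminf_le[OF _ tsum sums_summable[OF ks]]) (rule tb')
  also have "\<dots> = K0 * normB_R \<psi> F" using ks by (simp add: sums_iff)
  finally show "(\<Sum>n. sup_norm (conv F (phi_k \<psi> (?d n))) * L1_norm (chi \<psi> (?d n)))
         \<le> (3 * L1_norm (phi_k \<psi> 0)) * normB_R \<psi> F"
    by (simp add: a_def K0_def)
qed

lemma normB_nonneg: "F \<in> B_R \<psi> \<Longrightarrow> normB_R \<psi> F \<ge> 0"
proof -
  assume F: "F \<in> B_R \<psi>"
  have FB: "F \<in> BUC" using F by (simp add: B_R_def)
  show ?thesis unfolding normB_R_def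
  proof (rule infsum_nonneg)
    fix k
    show "0 \<le> sup_norm (conv F (phi_k \<psi> k))"
      by (rule sup_norm_nonneg)
         (use conv_BUC[OF FB phi_meas'[OF adm] phi_integrable[OF adm], of k] in \<open>simp add: BUC_def\<close>)
  qed
qed

end

theorem mainTheorem14:
  fixes \<psi> :: "real \<Rightarrow> real"
  assumes "admissible \<psi>"
  shows "B_C \<psi> \<subseteq> A_C \<and> B0_C \<psi> \<subseteq> A0_C
    \<and> (\<exists>K>0. \<forall>\<phi>\<in>B_C \<psi>. normA_C \<phi> \<le> K * normB_C \<psi> \<phi>)"
proof -
  note adm = assms
  have BA: "F \<in> A_R" if "F \<in> B_R \<psi>" for F
  proof -
    have FB: "F \<in> BUC" using that by (simp add: B_R_def)
    show ?thesis unfolding A_space_def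
      using B_rep(1)[OF adm that conv_BUC[OF FB phi_meas'[OF adm] phi_integrable[OF adm]]] by blast
  qed
  have BA0: "F \<in> A0_R" if "F \<in> B0_R \<psi>" for F
  proof -
    have FB: "F \<in> BUC" "F \<in> C0" using that by (simp_all add: B0_R_def B_R_def)
    have F: "F \<in> B_R \<psi>" using that by (simp add: B0_R_def)
    show ?thesis unfolding A_space_def
      using B_rep(1)[OF adm F conv_C0[OF FB phi_meas'[OF adm] phi_integrable[OF adm]]] by blast
  qed
  define K where "K = 3 * L1_norm (phi_k \<psi> 0) + 1"
  have K0: "K > 0" unfolding K_def using L1_nonneg[of "phi_k \<psi> 0"] by linarith
  have bound: "normA_R F \<le> K * normB_R \<psi> F" if F: "F \<in> B_R \<psi>" for F
  proof -
    have FB: "F \<in> BUC" using F by (simp add: B_R_def)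
    note cB = conv_BUC[OF FB phi_meas'[OF adm] phi_integrable[OF adm]]
    have "normA_R F \<le> (\<Sum>n. sup_norm (conv F (phi_k \<psi> (int_decode n))) * L1_norm (chi \<psi> (int_decode n)))"
      by (rule A_norm_le[OF B_rep(1)[OF adm F cB]]) simp
    also have "\<dots> \<le> (3 * L1_norm (phi_k \<psi> 0)) * normB_R \<psi> F" by (rule B_rep(2)[OF adm F cB])
    also have "\<dots> \<le> K * normB_R \<psi> F"
      unfolding K_def by (rule mult_right_mono) (use normB_nonneg[OF adm F] in auto)
    finally show ?thesis .
  qed
  have "B_C \<psi> \<subseteq> A_C" unfolding half_space_def using BA by blast
  moreover have "B0_C \<psi> \<subseteq> A0_C" unfolding half_space_def using BA0 by blast
  moreover have "\<forall>\<phi>\<in>B_C \<psi>. normA_C \<phi> \<le> K * normB_C \<psi> \<phi>"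
  proof
    fix \<phi> assume "\<phi> \<in> B_C \<psi>"
    then obtain F0 where F0: "F0 \<in> B_R \<psi>" "tildeF F0 = \<phi>" unfolding half_space_def by blast
    have ne: "{normB_R \<psi> F | F. F \<in> B_R \<psi> \<and> tildeF F = \<phi>} \<noteq> {}" using F0 by blast
    have "normA_C \<phi> / K \<le> normB_C \<psi> \<phi>"
      unfolding transfer_norm_def
    proof (rule cInf_greatest[OF ne])
      fix y assume "y \<in> {normB_R \<psi> F | F. F \<in> B_R \<psi> \<and> tildeF F = \<phi>}"
      then obtain F where y: "y = normB_R \<psi> F" and F: "F \<in> B_R \<psi>" "tildeF F = \<phi>" by blast
      have "Inf {normA_R G | G. G \<in> A_R \<and> tildeF G = \<phi>} \<le> normA_R F"
      proof (rule cInf_lower)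
        show "normA_R F \<in> {normA_R G | G. G \<in> A_R \<and> tildeF G = \<phi>}" using F BA by blast
        show "bdd_below {normA_R G | G. G \<in> A_R \<and> tildeF G = \<phi>}"
          by (rule bdd_belowI[of _ 0]) (auto intro: A_norm_nonneg)
      qed
      also have "\<dots> \<le> K * y" unfolding y by (rule bound[OF F(1)])
      finally show "Inf {normA_R G | G. G \<in> A_R \<and> tildeF G = \<phi>} / K \<le> y"
        using K0 by (simp add: divide_le_eq mult.commute)
    qed
    thus "normA_C \<phi> \<le> K * normB_C \<psi> \<phi>" using K0 by (simp add: divide_le_eq mult.commute)
  qed
  ultimately show ?thesis using K0 by blast
qed


end
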